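(* Let $f(z)=z+\sum_{n\ge 2}a_nz^n\in\mathcal{BT}_{\mathfrak{B}}$ and let $\gamma_1,\gamma_2,\gamma_3$ be its logarithmic coefficients. Then $$|H_{2,1}(F_f/2)|=|\gamma_1\gamma_3-\gamma_2^2|\le\frac{1}{144}.$$ The inequality is sharp, with equality for $f_2(z)=\int_0^z\sqrt{1+\tanh(t^2)}\,dt$.
   Context: $\mathbb{D}=\{z\in\mathbb{C}:|z|<1\}$. $\mathcal{S}$ is the class of univalent analytic functions $f$ on $\mathbb{D}$ normalized by $f(0)=0$, $f'(0)=1$, i.e. $f(z)=z+\sum_{n\ge2}a_nz^n$. For analytic $g,h$ on $\mathbb{D}$, $g\prec h$ means there is an analytic $\omega:\mathbb{D}\to\mathbb{D}$ with $\omega(0)=0$ and $g=h\circ\omega$. Let $\mathfrak{B}(z)=\sqrt{1+\tanh z}$ (principal branch, $\mathfrak{B}(0)=1$). The class $\mathcal{BT}_{\mathfrak{B}}$ is $\{f\in\mathcal{S}: f'(z)\prec \mathfrak{B}(z)\}$. The logarithmic coefficients are defined by $F_f(z):=\log\frac{f(z)}{z}=2\sum_{n\ge1}\gamma_nz^n$; explicitly $\gamma_1=\tfrac12 a_2$, $\gamma_2=\tfrac12(a_3-\tfrac12a_2^2)$, $\gamma_3=\tfrac12(a_4-a_2a_3+\tfrac13a_2^3)$. The Hankel determinant $H_{2,1}(F_f/2):=\gamma_1\gamma_3-\gamma_2^2=\frac{1}{48}(a_2^4-12a_3^2+12a_2a_4)$. *)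

theory Defs
  imports "HOL-Complex_Analysis.Complex_Analysis"
begin

definition BB :: "complex \<Rightarrow> complex" where
  "BB z = csqrt (1 + tanh z)"

definition subordinate :: "(complex \<Rightarrow> complex) \<Rightarrow> (complex \<Rightarrow> complex) \<Rightarrow> bool" where
  "subordinate g h \<longleftrightarrow>
     (\<exists>\<omega>. \<omega> holomorphic_on ball 0 1 \<and> \<omega> ` ball 0 1 \<subseteq> ball 0 1 \<and> \<omega> 0 = 0 \<and>
          (\<forall>z\<in>ball 0 1. g z = h (\<omega> z)))"

definition class_S :: "(complex \<Rightarrow> complex) \<Rightarrow> bool" where
  "class_S f \<longleftrightarrow> f holomorphic_on ball 0 1 \<and> inj_on f (ball 0 1) \<and> f 0 = 0 \<and> deriv f 0 = 1"

definition class_BT :: "(complex \<Rightarrow> complex) \<Rightarrow> bool" where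
  "class_BT f \<longleftrightarrow> class_S f \<and> subordinate (deriv f) BB"

definition tcoeff :: "(complex \<Rightarrow> complex) \<Rightarrow> nat \<Rightarrow> complex" where
  "tcoeff f n = (deriv ^^ n) f 0 / fact n"

text \<open>Logarithmic coefficients gamma_1, gamma_2, gamma_3 in terms of a_2, a_3, a_4.\<close>
definition gamma1 :: "(complex \<Rightarrow> complex) \<Rightarrow> complex" where
  "gamma1 f = tcoeff f 2 / 2"

definition gamma2 :: "(complex \<Rightarrow> complex) \<Rightarrow> complex" where
  "gamma2 f = (tcoeff f 3 - tcoeff f 2 ^ 2 / 2) / 2"

definition gamma3 :: "(complex \<Rightarrow> complex) \<Rightarrow> complex" where
  "gamma3 f = (tcoeff f 4 - tcoeff f 2 * tcoeff f 3 + tcoeff f 2 ^ 3 / 3) / 2"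

definition H21 :: "(complex \<Rightarrow> complex) \<Rightarrow> complex" where
  "H21 f = gamma1 f * gamma3 f - gamma2 f ^ 2"

end

theory Submission
  imports Defs
begin

lemma fps_exp_unique:
  fixes f g :: "complex \<Rightarrow> complex"
  assumes "f has_fps_expansion F" "g has_fps_expansion G" "eventually (\<lambda>z. f z = g z) (nhds 0)"
  shows "F = G"
proof (rule fps_ext)
  fix n
  have "(deriv ^^ n) f 0 = (deriv ^^ n) g 0"
    by (rule higher_deriv_cong_ev) (use assms(3) in auto)
  thus "F $ n = G $ n" using fps_nth_fps_expansion[OF assms(1)] fps_nth_fps_expansion[OF assms(2)] by simp
qed

lemma BB_analytic: "BB analytic_on {0}"
proof -
  have "(\<lambda>z. csqrt (1 + tanh z)) analytic_on {0}"
    by (rule analytic_intros)+ (auto simp: nonpos_Reals_def)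
  thus ?thesis by (simp add: BB_def[abs_def])
qed

definition "Bf = fps_expansion BB 0"

lemma BB_fps: "BB has_fps_expansion Bf"
  unfolding Bf_def by (rule analytic_at_imp_has_fps_expansion_0[OF BB_analytic])

lemma Bf_eq: "Bf ^ 2 * (fps_exp 1 + fps_exp (-1)) = 2 * fps_exp 1"
proof -
  have e1: "(\<lambda>x. exp (1 * x)) has_fps_expansion fps_exp (1::complex)" by (rule has_fps_expansion_exp)
  have e2: "(\<lambda>x. exp ((-1) * x)) has_fps_expansion fps_exp (-1::complex)" by (rule has_fps_expansion_exp)
  have L: "(\<lambda>z. BB z * BB z * (exp (1*z) + exp ((-1)*z))) has_fps_expansion Bf * Bf * (fps_exp 1 + fps_exp (-1))"
    by (intro has_fps_expansion_mult has_fps_expansion_add BB_fps e1 e2)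
  have R: "(\<lambda>z. 2 * exp (1*z)) has_fps_expansion 2 * fps_exp (1::complex)"
    by (intro has_fps_expansion_mult e1) auto
  have "eventually (\<lambda>z. cosh z \<noteq> (0::complex)) (nhds 0)"
  proof -
    have "open {z::complex. cosh z \<noteq> 0}" by (intro open_Collect_neq continuous_intros)
    from eventually_nhds_in_open[OF this, of 0] show ?thesis by simp
  qed
  hence ev: "eventually (\<lambda>z. BB z * BB z * (exp (1*z) + exp ((-1)*z)) = 2 * exp (1*z)) (nhds 0)"
  proof (rule eventually_mono)
    fix z :: complex assume c: "cosh z \<noteq> 0"
    have "BB z * BB z = 1 + tanh z" unfolding BB_def by (metis power2_csqrt power2_eq_square)
    also have "\<dots> = (cosh z + sinh z) / cosh z" using c by (simp add: tanh_def field_simps)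
    finally show "BB z * BB z * (exp (1*z) + exp ((-1)*z)) = 2 * exp (1*z)"
      using c by (simp add: cosh_def sinh_def field_simps scaleR_conv_of_real)
  qed
  show ?thesis using fps_exp_unique[OF L R ev] by (simp add: power2_eq_square)
qed

lemma Bf_0: "Bf $ 0 = 1"
  using fps_nth_fps_expansion[OF BB_fps, of 0] by (simp add: BB_def)

lemma Bf_coeffs: "Bf $ 1 = 1/2" "Bf $ 2 = -1/8" "Bf $ 3 = -5/48"
proof -
  note E = Bf_eq
  have c: "(Bf ^ 2 * (fps_exp 1 + fps_exp (-1))) $ n = (2 * fps_exp (1::complex)) $ n" for n
    using E by simp
  note c1 = c[of 1] and c2 = c[of 2] and c3 = c[of 3]
  have h1: "Bf $ 1 = 1/2" using c1 Bf_0
    by (simp add: fps_mult_nth power2_eq_square eval_nat_numeral fps_numeral_nth field_simps; algebra)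
  have h1': "Bf $ Suc 0 = 1/2" using h1 by simp
  have h2: "Bf $ 2 = -1/8" using c2
    by (simp add: Bf_0 h1'
 fps_mult_nth power2_eq_square eval_nat_numeral fps_numeral_nth field_simps; algebra)
  have h2': "Bf $ Suc (Suc 0) = -1/8" using h2 by (simp add: eval_nat_numeral)
  have h3: "Bf $ 3 = -5/48" using c3
    by (simp add: Bf_0 h1' h2'
 fps_mult_nth power2_eq_square eval_nat_numeral fps_numeral_nth field_simps; algebra)
  show "Bf $ 1 = 1/2" "Bf $ 2 = -1/8" "Bf $ 3 = -5/48" by fact+
qed

lemma compose_coeffs:
  fixes B W :: "complex fps"
  assumes "W $ 0 = 0"
  shows "(B oo W) $ 1 = B$1 * W$1"
    "(B oo W) $ 2 = B$1 * W$2 + B$2 * (W$1)^2"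
    "(B oo W) $ 3 = B$1 * W$3 + 2 * B$2 * W$1 * W$2 + B$3 * (W$1)^3"
  using assms by (simp_all add: fps_compose_nth fps_mult_nth eval_nat_numeral algebra_simps)

lemma poly_ineq:
  fixes x y :: real
  assumes "0 \<le> x" "x \<le> 1" "0 \<le> y" "y \<le> 1"
  shows "9/8 * x * (1-x^2) * (1-y^2) + (1-x^2) * y^2 * (1 + x^2/8) + x^2 * (1-x^2) * y / 16 + 73/256 * x^4 \<le> 1"
proof -
  define s where "s = 1 - x^2"
  have s0: "0 \<le> s" using assms unfolding s_def by (simp add: power_le_one)
  define P where "P y = 9/8 * x * s * (1-y^2) + s * y^2 * (1 + x^2/8) + x^2 * s * y / 16 + 73/256 * x^4" for y
  have conv: "P y \<le> (1-y) * P 0 + y * P 1"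
  proof -
    have "(1-y) * P 0 + y * P 1 - P y = y * (1-y) * s * (1 + x^2/8 - 9/8*x)"
      unfolding P_def power2_eq_square by (simp add: field_simps; algebra)
    moreover have "1 + x^2/8 - 9/8*x \<ge> 0"
    proof -
      have "1 + x^2/8 - 9/8*x = (1-x)*(1-x/8)" unfolding power2_eq_square by (simp add: field_simps; algebra)
      thus ?thesis using assms by simp
    qed
    moreover have "y * (1 - y) * s \<ge> 0" using assms s0 by simp
    ultimately have "(1-y) * P 0 + y * P 1 - P y \<ge> 0" by (metis mult_nonneg_nonneg)
    thus ?thesis by simp
  qed
  have p0: "P 0 \<le> 1"
  proof -
    have "P 0 = 9/8 * x * (1-x^2) + 73/256 * x^4" unfolding P_def s_def by simp
    also have "\<dots> \<le> 1"
    proof -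
      have a: "x*(1-x) \<le> 1/4" using zero_le_power2[of "x - 1/2"] by (simp add: power2_eq_square algebra_simps)
      have b: "x*(1-x^2) = (x*(1-x))*(1+x)" by (simp add: power2_eq_square algebra_simps)
      have "(x*(1-x))*(1+x) \<le> (1/4) * 2" using a assms by (intro mult_mono) auto
      hence c: "x*(1-x^2) \<le> 1/2" unfolding b by simp
      have d: "x^4 \<le> 1" using assms by (simp add: power_le_one)
      show ?thesis using c d by simp
    qed
    finally show ?thesis .
  qed
  have p1: "P 1 \<le> 1"
  proof -
    have "P 1 = 1 - 13/16 * x^2 - 3/16 * x^4 + 73/256 * x^4" unfolding P_def s_def by (simp add: algebra_simps power2_eq_square power4_eq_xxxx)
    also have "\<dots> \<le> 1"
    proof -
      have "x^2 * x^2 \<le> 1 * x^2" using assms by (intro mult_right_mono) (auto simp: power_le_one)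
      hence "x^4 \<le> x^2" by (simp add: power4_eq_xxxx power2_eq_square mult.assoc)
      moreover have "0 \<le> x^2" by simp
      ultimately show ?thesis by linarith
    qed
    finally show ?thesis .
  qed
  have "P y \<le> 1"
  proof -
    have "(1-y) * P 0 + y * P 1 \<le> (1-y) * 1 + y * 1"
      using assms p0 p1 by (intro add_mono mult_left_mono) auto
    thus ?thesis using conv by simp
  qed
  thus ?thesis unfolding P_def s_def by (simp add: algebra_simps)
qed

lemma hankel_bound:
  fixes c1 c2 c3 :: complex
  assumes h1: "cmod c1 \<le> 1" and h2: "cmod c2 \<le> 1 - cmod c1^2"
    and h3: "cmod (c3 * (1 - cmod c1^2) + cnj c1 * c2^2) \<le> (1 - cmod c1^2)^2 - cmod c2^2"
    and h4: "cmod c1 = 1 \<Longrightarrow> c3 = 0"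
  shows "cmod (3/8 * c1*c3 - 1/48 * c1^2*c2 - 1/3 * c2^2 - 73/768 * c1^4) \<le> 1/3"
proof (cases "cmod c1 = 1")
  case True
  hence "c2 = 0" "c3 = 0" using h2 h4 by auto
  thus ?thesis using True by (simp add: norm_power)
next
  case False
  define x where "x = cmod c1"
  define s where "s = 1 - x^2"
  define t where "t = cmod c2"
  define w where "w = c3 * of_real s + cnj c1 * c2^2"
  have x0: "0 \<le> x" and x1: "x < 1" using h1 False unfolding x_def by auto
  have s0: "s > 0" unfolding s_def using x0 x1 using power_strict_mono[of x 1 2] by simp
  have t0: "0 \<le> t" and ts: "t \<le> s" using h2 unfolding t_def s_def x_def by auto
  have wn: "cmod w \<le> s^2 - t^2" using h3 unfolding w_def s_def t_def x_def
    by (simp add: of_real_diff of_real_power)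
  have cc: "c1 * cnj c1 = of_real (x^2)" unfolding x_def by (simp add: complex_norm_square[symmetric])
  have ident: "3 * (3/8 * c1*c3 - 1/48 * c1^2*c2 - 1/3 * c2^2 - 73/768 * c1^4) =
     9/8 * c1 * w / of_real s - c2^2 * of_real ((9/8 * x^2 + s)/s) - 1/16*c1^2*c2 - 73/256*c1^4"
  proof -
    have sne: "(of_real s :: complex) \<noteq> 0" using s0 by simp
    have "c1 * w = c1 * c3 * of_real s + of_real (x^2) * c2^2"
      unfolding w_def using cc by (simp add: algebra_simps)
    thus ?thesis using sne s0 by (simp add: field_simps of_real_add of_real_mult of_real_divide)
  qed
  have "3 * cmod (3/8 * c1*c3 - 1/48 * c1^2*c2 - 1/3 * c2^2 - 73/768 * c1^4)
      = cmod (3 * (3/8 * c1*c3 - 1/48 * c1^2*c2 - 1/3 * c2^2 - 73/768 * c1^4))"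
    by (simp only: norm_mult) simp
  also have "\<dots> = cmod (9/8 * c1 * w / of_real s - c2^2 * of_real ((9/8 * x^2 + s)/s) - 1/16*c1^2*c2 - 73/256*c1^4)"
    by (simp only: ident)
  also have "\<dots> \<le> cmod (9/8 * c1 * w / of_real s) + cmod (c2^2 * of_real ((9/8 * x^2 + s)/s))
       + cmod (1/16*c1^2*c2) + cmod (73/256*c1^4)"
    by (intro order.trans[OF norm_triangle_ineq4] add_mono order_refl) 
  also have "\<dots> = 9/8 * x * cmod w / s + t^2 * ((9/8 * x^2 + s)/s) + x^2 * t / 16 + 73/256 * x^4"
  proof -
    have q: "(9/8 * x^2 + s)/s \<ge> 0" using s0 by simp
    have e2: "cmod (c2^2 * of_real ((9/8 * x^2 + s)/s)) = t^2 * ((9/8 * x^2 + s)/s)"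
      unfolding norm_mult norm_of_real norm_power t_def using q abs_of_nonneg[OF q] by simp
    show ?thesis unfolding e2 using s0 x0 unfolding x_def t_def by (simp add: norm_mult norm_divide norm_power)
  qed
  also have "\<dots> \<le> 9/8 * x * (s^2 - t^2) / s + t^2 * ((9/8 * x^2 + s)/s) + x^2 * t / 16 + 73/256 * x^4"
    using wn s0 x0 by (intro add_mono order_refl divide_right_mono mult_left_mono) auto
  also have "\<dots> = 9/8 * x * (1-x^2) * (1-(t/s)^2) + (1-x^2) * (t/s)^2 * (1 + x^2/8) + x^2 * (1-x^2) * (t/s) / 16 + 73/256 * x^4"
    using s0 unfolding s_def[symmetric] by (simp add: field_simps power2_eq_square) (simp add: s_def algebra_simps power2_eq_square)
  also have "\<dots> \<le> 1"
    using poly_ineq[of x "t/s"] x0 x1 t0 ts s0 by simp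
  finally show ?thesis by simp
qed

definition schur :: "(complex \<Rightarrow> complex) \<Rightarrow> bool" where
  "schur p \<longleftrightarrow> p holomorphic_on ball 0 1 \<and> p ` ball 0 1 \<subseteq> ball 0 1 \<and> p 0 = 0"

definition "PS p = fps_expansion p 0"

lemma schur_lt: "schur p \<Longrightarrow> norm z < 1 \<Longrightarrow> norm (p z) < 1"
  unfolding schur_def by (auto simp: image_subset_iff)

lemma hol_ball_fps: "p holomorphic_on ball 0 1 \<Longrightarrow> p has_fps_expansion PS p"
  unfolding PS_def
  by (rule analytic_at_imp_has_fps_expansion_0) (auto simp: analytic_on_open[symmetric] intro: analytic_on_subset)

lemma ev_ball: "eventually (\<lambda>z. z \<in> ball (0::complex) 1) (nhds 0)"
  by (rule eventually_nhds_in_open) auto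

lemma ev_ball_eq: "(\<And>z. z \<in> ball 0 1 \<Longrightarrow> f z = g z) \<Longrightarrow> eventually (\<lambda>z. f z = g z) (nhds (0::complex))"
  using ev_ball by (rule eventually_mono) auto

lemma schur_S1:
  assumes "schur p" shows "cmod (PS p $ 1) \<le> 1"
proof -
  have "PS p $ 1 = deriv p 0" using fps_nth_fps_expansion[OF hol_ball_fps, of p 1] assms
    by (simp add: schur_def)
  moreover have "cmod (deriv p 0) \<le> 1"
    using assms schur_lt[OF assms] unfolding schur_def by (intro Schwarz_Lemma(2)[of p 0]) auto
  ultimately show ?thesis by simp
qed

lemma schur_rot:
  assumes "schur p" "cmod (PS p $ 1) = 1" "n \<ge> 2" shows "PS p $ n = 0"
proof -
  have d: "PS p $ 1 = deriv p 0" using fps_nth_fps_expansion[OF hol_ball_fps, of p 1] assms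
    by (simp add: schur_def)
  obtain a where a: "\<And>z. norm z < 1 \<Longrightarrow> p z = a * z"
    using Schwarz_Lemma(3)[of p 0] assms d schur_lt[OF assms(1)] unfolding schur_def by auto
  have e: "(\<lambda>z. a * z) has_fps_expansion fps_const a * fps_X"
    by (intro has_fps_expansion_cmult_left has_fps_expansion_fps_X)
  have "PS p = fps_const a * fps_X"
    using assms(1) unfolding schur_def by (intro fps_exp_unique[OF hol_ball_fps e] ev_ball_eq) (auto simp: a)
  thus ?thesis using assms(3) by simp
qed

lemma schur_construct:
  assumes "schur p" "cmod (PS p $ 1) < 1"
  defines "c \<equiv> PS p $ 1"
  shows "\<exists>h. schur h \<and> PS h $ 1 * (1 - cnj c * c) = PS p $ 2 \<and>
              PS h $ 2 * (1 - cnj c * c) = PS p $ 3 + cnj c * PS p $ 2 * PS h $ 1"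
proof -
  have hp: "p holomorphic_on ball 0 1" and pb: "\<And>z. norm z < 1 \<Longrightarrow> norm (p z) < 1" and p0: "p 0 = 0"
    using assms(1) schur_lt[OF assms(1)] unfolding schur_def by auto
  have d: "c = deriv p 0" using fps_nth_fps_expansion[OF hol_ball_fps[OF hp], of 1] unfolding c_def by simp
  define g where "g z = (if z = 0 then deriv p 0 else (p z - p 0) / (z - 0))" for z
  have hg: "g holomorphic_on ball 0 1"
    unfolding g_def[abs_def] by (rule pole_lemma[OF hp]) auto
  have pg: "p z = z * g z" for z using p0 by (simp add: g_def)
  have gb: "norm (g z) < 1" if zl: "norm z < 1" for z
  proof (cases "z = 0")
    case True thus ?thesis using assms(2) d c_def by (simp add: g_def)
  next
    case False
    have le: "norm (p z) \<le> norm z" using Schwarz_Lemma(1)[OF hp p0 pb zl] .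
    have "norm (p z) \<noteq> norm z"
    proof
      assume eq: "norm (p z) = norm z"
      obtain a where a: "\<And>z. norm z < 1 \<Longrightarrow> p z = a * z" "norm a = 1"
        using Schwarz_Lemma(3)[OF hp p0 pb zl] eq zl False by blast
      have e: "(\<lambda>z. a * z) has_fps_expansion fps_const a * fps_X"
        by (intro has_fps_expansion_cmult_left has_fps_expansion_fps_X)
      have "PS p = fps_const a * fps_X"
        by (intro fps_exp_unique[OF hol_ball_fps[OF hp] e] ev_ball_eq) (auto simp: a)
      hence "c = a" unfolding c_def by simp
      thus False using a(2) assms(2) c_def by simp
    qed
    hence "norm (p z) < norm z" using le by simp
    thus ?thesis using False p0 by (simp add: g_def norm_divide divide_less_eq)
  qed
  have c1: "norm c < 1" using assms(2) c_def by simp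
  define h where "h z = Moebius_function 0 c (g z)" for z
  have hh: "h holomorphic_on ball 0 1"
    unfolding h_def[abs_def]
    by (rule holomorphic_on_compose_gen[OF hg Moebius_function_holomorphic[OF c1], unfolded o_def])
       (use gb in auto)
  have hb: "h ` ball 0 1 \<subseteq> ball 0 1"
    using gb c1 by (auto simp: h_def intro!: Moebius_function_norm_lt_1)
  have g0: "g 0 = c" using d by (simp add: g_def)
  have h0: "h 0 = 0" by (simp add: h_def g0 Moebius_function_eq_zero)
  have sh: "schur h" using hh hb h0 by (simp add: schur_def)
  define P G H where "P = PS p" and "G = PS g" and "H = PS h"
  have eP: "p has_fps_expansion P" using hol_ball_fps[OF hp] P_def by simp
  have eG: "g has_fps_expansion G" using hol_ball_fps[OF hg] G_def by simp
  have eH: "h has_fps_expansion H" using hol_ball_fps[OF hh] H_def by simp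
  have PG: "P = fps_X * G"
  proof -
    have "(\<lambda>z. z * g z) has_fps_expansion fps_X * G"
      by (intro has_fps_expansion_mult has_fps_expansion_fps_X eG)
    thus ?thesis by (intro fps_exp_unique[OF eP]) (auto simp: pg)
  qed
  have HG: "H * (1 - fps_const (cnj c) * G) = G - fps_const c"
  proof -
    have l: "(\<lambda>z. h z * (1 - cnj c * g z)) has_fps_expansion H * (1 - fps_const (cnj c) * G)"
      by (intro has_fps_expansion_mult has_fps_expansion_diff has_fps_expansion_cmult_left eG eH has_fps_expansion_1)
    have r: "(\<lambda>z. g z - c) has_fps_expansion G - fps_const c"
      by (intro has_fps_expansion_diff eG has_fps_expansion_const)
    have "h z * (1 - cnj c * g z) = g z - c" if "z \<in> ball 0 1" for z
    proof -
      have "norm (cnj c * g z) < 1 * 1" using gb[of z] c1 that by (intro norm_mult_less) auto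
      hence "1 - cnj c * g z \<noteq> 0" by auto
      thus ?thesis by (simp add: h_def Moebius_function_simple)
    qed
    thus ?thesis by (intro fps_exp_unique[OF l r] ev_ball_eq)
  qed
  have G0: "G $ 0 = c" using has_fps_expansion_imp_0_eq_fps_nth_0[OF eG] g0 by simp
  have H0: "H $ 0 = 0" using has_fps_expansion_imp_0_eq_fps_nth_0[OF eH] h0 by simp
  have PGn: "P $ Suc n = G $ n" for n using PG by simp
  have k1: "(H * (1 - fps_const (cnj c) * G)) $ 1 = (G - fps_const c) $ 1" using HG by simp
  have k2: "(H * (1 - fps_const (cnj c) * G)) $ 2 = (G - fps_const c) $ 2" using HG by simp
  have r1: "H $ 1 * (1 - cnj c * c) = P $ 2"
    using k1 G0 H0 PGn[of 1] by (simp add: fps_mult_nth eval_nat_numeral algebra_simps)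
  have r2: "H $ 2 * (1 - cnj c * c) = P $ 3 + cnj c * P $ 2 * H $ 1"
    using k2 G0 H0 PGn[of 1] PGn[of 2] by (simp add: fps_mult_nth eval_nat_numeral algebra_simps)
  show ?thesis using sh r1 r2 unfolding P_def H_def by blast
qed

lemma cnj_mult_self: "cnj c * c = of_real ((cmod c)^2)"
  using complex_norm_square[of c] by (simp add: mult.commute)

lemma schur_S2:
  assumes "schur p" shows "cmod (PS p $ 2) \<le> 1 - cmod (PS p $ 1)^2"
proof (cases "cmod (PS p $ 1) = 1")
  case True thus ?thesis using schur_rot[OF assms True, of 2] by simp
next
  case False
  define c where "c = PS p $ 1"
  have c1: "cmod c < 1" using schur_S1[OF assms] False c_def by simp
  obtain h where h: "schur h" "PS h $ 1 * (1 - cnj c * c) = PS p $ 2"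
    using schur_construct[OF assms] c1 c_def by blast
  define s where "s = 1 - cmod c ^ 2"
  have s0: "s > 0" using c1 unfolding s_def by (simp add: abs_square_less_1)
  have "PS p $ 2 = PS h $ 1 * of_real s" using h(2) by (simp add: cnj_mult_self s_def)
  hence "cmod (PS p $ 2) = cmod (PS h $ 1) * s" using s0 by (simp add: norm_mult)
  also have "\<dots> \<le> 1 * s" using schur_S1[OF h(1)] s0 by (intro mult_right_mono) auto
  finally show ?thesis unfolding s_def c_def by simp
qed

lemma schur_S3:
  assumes "schur p" "cmod (PS p $ 1) < 1"
  shows "cmod (PS p $ 3 * (1 - cmod (PS p $ 1)^2) + cnj (PS p $ 1) * (PS p $ 2)^2)
          \<le> (1 - cmod (PS p $ 1)^2)^2 - cmod (PS p $ 2)^2"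
proof -
  define c where "c = PS p $ 1"
  have c1: "cmod c < 1" using assms c_def by simp
  obtain h where h: "schur h" "PS h $ 1 * (1 - cnj c * c) = PS p $ 2"
      "PS h $ 2 * (1 - cnj c * c) = PS p $ 3 + cnj c * PS p $ 2 * PS h $ 1"
    using schur_construct[OF assms] c_def by blast
  define s where "s = 1 - cmod c ^ 2"
  have s0: "s > 0" using c1 unfolding s_def by (simp add: abs_square_less_1)
  have e1: "PS p $ 2 = PS h $ 1 * of_real s" using h(2) by (simp add: cnj_mult_self s_def)
  have e2: "PS h $ 2 * of_real s = PS p $ 3 + cnj c * PS p $ 2 * PS h $ 1"
    using h(3) by (simp add: cnj_mult_self s_def)
  have "PS p $ 3 * of_real s + cnj c * (PS p $ 2)^2 = PS h $ 2 * of_real s * of_real s"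
    unfolding e2 by (simp add: e1 power2_eq_square algebra_simps)
  hence "cmod (PS p $ 3 * of_real s + cnj c * (PS p $ 2)^2) = cmod (PS h $ 2) * s^2"
    using s0 by (simp add: norm_mult power2_eq_square)
  also have "\<dots> \<le> (1 - cmod (PS h $ 1)^2) * s^2"
    using schur_S2[OF h(1)] by (intro mult_right_mono) auto
  also have "\<dots> = s^2 - cmod (PS p $ 2)^2"
    unfolding e1 using s0 by (simp add: norm_mult power2_eq_square algebra_simps)
  finally show ?thesis unfolding s_def c_def by (simp add: of_real_diff of_real_power)
qed

lemma tcoeff_PS: "f holomorphic_on ball 0 1 \<Longrightarrow> tcoeff f n = PS f $ n"
  using fps_nth_fps_expansion[OF hol_ball_fps, of f n] by (simp add: tcoeff_def)

lemma H21_formula: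
  fixes a2 a3 a4 c1 c2 c3 :: complex
  assumes "2 * a2 = c1/2" "3 * a3 = c2/2 - c1^2/8" "4 * a4 = c3/2 - 1/4 * c1*c2 - 5/48 * c1^3"
  shows "(a2/2) * ((a4 - a2 * a3 + a2^3/3)/2) - ((a3 - a2^2/2)/2)^2
         = (3/8 * c1*c3 - 1/48 * c1^2*c2 - 1/3 * c2^2 - 73/768 * c1^4) / 48"
proof -
  have a2: "a2 = c1/4" and a3: "a3 = (c2/2 - c1^2/8)/3" and a4: "a4 = (c3/2 - 1/4 * c1*c2 - 5/48 * c1^3)/4"
    using assms by (simp_all add: field_simps)
  show ?thesis unfolding a2 a3 a4 by (simp add: field_simps power2_eq_square power3_eq_cube power4_eq_xxxx; algebra)
qed

lemma part1:
  assumes "class_BT f" shows "cmod (H21 f) \<le> 1/144"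
proof -
  from assms have hf: "f holomorphic_on ball 0 1" and sub: "subordinate (deriv f) BB"
    unfolding class_BT_def class_S_def by auto
  obtain w where hw: "w holomorphic_on ball 0 1" "w ` ball 0 1 \<subseteq> ball 0 1" "w 0 = 0"
    and eq: "\<And>z. z \<in> ball 0 1 \<Longrightarrow> deriv f z = BB (w z)"
    using sub unfolding subordinate_def by blast
  have sw: "schur w" using hw by (simp add: schur_def)
  have eW: "w has_fps_expansion PS w" by (rule hol_ball_fps[OF hw(1)])
  have W0: "PS w $ 0 = 0" using has_fps_expansion_imp_0_eq_fps_nth_0[OF eW] hw(3) by simp
  have l: "deriv f has_fps_expansion fps_deriv (PS f)"
    by (intro has_fps_expansion_deriv hol_ball_fps[OF hf])
  have r: "(BB \<circ> w) has_fps_expansion (Bf oo PS w)"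
    by (intro has_fps_expansion_compose BB_fps eW W0)
  have D: "fps_deriv (PS f) = Bf oo PS w"
    by (intro fps_exp_unique[OF l r] ev_ball_eq) (simp add: eq)
  define c1 c2 c3 where "c1 = PS w $ 1" and "c2 = PS w $ 2" and "c3 = PS w $ 3"
  define a2 a3 a4 where "a2 = PS f $ 2" and "a3 = PS f $ 3" and "a4 = PS f $ 4"
  have k: "fps_deriv (PS f) $ n = (Bf oo PS w) $ n" for n using D by simp
  have r1: "2 * a2 = c1/2" using k[of 1] compose_coeffs(1)[OF W0, of Bf] Bf_coeffs
    unfolding a2_def c1_def by (simp add: eval_nat_numeral)
  have r2: "3 * a3 = c2/2 - c1^2/8" using k[of 2] compose_coeffs(2)[OF W0, of Bf] Bf_coeffs
    unfolding a3_def c1_def c2_def by (simp add: eval_nat_numeral)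
  have r3: "4 * a4 = c3/2 - 1/4 * c1*c2 - 5/48 * c1^3" using k[of 3] compose_coeffs(3)[OF W0, of Bf] Bf_coeffs
    unfolding a4_def c1_def c2_def c3_def by (simp add: eval_nat_numeral)
  have H: "H21 f = (3/8 * c1*c3 - 1/48 * c1^2*c2 - 1/3 * c2^2 - 73/768 * c1^4) / 48"
    unfolding H21_def gamma1_def gamma2_def gamma3_def tcoeff_PS[OF hf] a2_def[symmetric] a3_def[symmetric] a4_def[symmetric]
    by (rule H21_formula[OF r1 r2 r3])
  have b1: "cmod c1 \<le> 1" using schur_S1[OF sw] c1_def by simp
  have b2: "cmod c2 \<le> 1 - cmod c1^2" using schur_S2[OF sw] c1_def c2_def by simp
  have b4: "cmod c1 = 1 \<Longrightarrow> c3 = 0" using schur_rot[OF sw, of 3] c1_def c3_def by simp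
  have b3: "cmod (c3 * (1 - cmod c1^2) + cnj c1 * c2^2) \<le> (1 - cmod c1^2)^2 - cmod c2^2"
  proof (cases "cmod c1 = 1")
    case True thus ?thesis using b2 b4 by simp
  next
    case False thus ?thesis using schur_S3[OF sw] b1 c1_def c2_def c3_def by simp
  qed
  have "cmod (3/8 * c1*c3 - 1/48 * c1^2*c2 - 1/3 * c2^2 - 73/768 * c1^4) \<le> 1/3"
    by (rule hankel_bound[OF b1 b2 b3 b4])
  thus ?thesis unfolding H by (simp add: norm_divide)
qed

lemma inj_re_pos:
  assumes hf: "f holomorphic_on ball 0 1" and pos: "\<And>z. z \<in> ball 0 1 \<Longrightarrow> Re (deriv f z) > 0"
  shows "inj_on f (ball 0 1)"
proof (rule inj_onI, rule ccontr)
  fix z w assume z: "z \<in> ball 0 1" and w: "w \<in> ball 0 1" and eq: "f z = f w" and ne: "z \<noteq> w"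
  define d where "d = w - z"
  have d0: "d \<noteq> 0" using ne d_def by simp
  define g where "g s = f (z + s * d) / d" for s
  have inb: "z + of_real t * d \<in> ball 0 1" if "0 \<le> t" "t \<le> 1" for t
  proof -
    have "z + of_real t * d = (1 - t) *\<^sub>R z + t *\<^sub>R w" by (simp add: d_def scaleR_conv_of_real algebra_simps)
    thus ?thesis using convexD_alt[OF convex_ball z w that] by simp
  qed
  have der: "\<exists>y. ((\<lambda>t. Re (g (of_real t))) has_real_derivative y) (at t) \<and> y > 0" if "0 \<le> t" "t \<le> 1" for t
  proof -
    define p where "p = z + of_real t * d"
    have pb: "p \<in> ball 0 1" using inb[OF that] p_def by simp
    have fd: "(f has_field_derivative deriv f p) (at p)"
      using holomorphic_derivI[OF hf open_ball pb] .
    have "(g has_field_derivative deriv f p) (at (of_real t))"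
    proof -
      have i: "((\<lambda>s. z + s * d) has_field_derivative d) (at (of_real t))"
        by (auto intro!: derivative_eq_intros)
      have "((\<lambda>s. f (z + s * d)) has_field_derivative deriv f p * d) (at (of_real t))"
        using DERIV_chain2[OF fd[unfolded p_def] i] p_def by simp
      hence "((\<lambda>s. f (z + s * d) / d) has_field_derivative deriv f p * d / d) (at (of_real t))"
        by (rule DERIV_cdivide)
      thus ?thesis using d0 unfolding g_def[abs_def] by simp
    qed
    hence "((\<lambda>t. g (of_real t)) has_vector_derivative deriv f p) (at t)"
      by (rule has_vector_derivative_real_field)
    hence "((\<lambda>t. Re (g (of_real t))) has_real_derivative Re (deriv f p)) (at t)"
      by (simp add: has_vector_derivative_complex_iff)
    thus ?thesis using pos[OF pb] by blast
  qed
  have "Re (g (of_real 0)) < Re (g (of_real 1))"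
    by (rule DERIV_pos_imp_increasing[of 0 1]) (use der in auto)
  moreover have "g (of_real 0) = g (of_real 1)" using eq by (simp add: g_def d_def)
  ultimately show False by simp
qed

lemma BB_not_nonpos:
  fixes u :: complex assumes u: "norm u < 1" shows "1 + tanh u \<notin> \<real>\<^sub>\<le>\<^sub>0"
proof
  assume "1 + tanh u \<in> \<real>\<^sub>\<le>\<^sub>0"
  then obtain r where r: "1 + tanh u = of_real r" "r \<le> 0" by (auto simp: nonpos_Reals_def)
  show False
  proof (cases "cosh u = 0")
    case True thus False using r by (simp add: tanh_def)
  next
    case False
    have "of_real r * cosh u = cosh u + sinh u" using r(1)[symmetric] False by (simp add: tanh_def field_simps)
    also have "\<dots> = exp u" by (simp add: cosh_def sinh_def scaleR_conv_of_real field_simps)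
    finally have e: "of_real r * (exp u + exp (-u)) = 2 * exp u" by (simp add: cosh_def scaleR_conv_of_real field_simps)
    have EF: "exp u * exp (-u) = 1" by (simp add: exp_minus_inverse)
    have FF: "exp (-u) * exp (-u) = exp (-2*u)" by (subst mult_exp_exp) simp
    have "of_real r * (exp u + exp (-u)) * exp (-u) = 2 * exp u * exp (-u)" using e by simp
    hence "of_real r * (exp u * exp (-u) + exp (-u) * exp (-u)) = 2 * (exp u * exp (-u))"
      by (simp only: distrib_left distrib_right mult.assoc)
    hence e2: "of_real r * (1 + exp (-2*u)) = 2"
      by (simp only: EF FF mult_1_right)
    have r0: "r \<noteq> 0" using e2 by auto
    hence rn: "r < 0" using r(2) by simp
    have ex: "exp (-2*u) = of_real (2/r - 1)" using e2 r0 by (simp add: field_simps)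
    define q where "q = -2*u"
    have "Im (exp q) = 0" using ex q_def by simp
    hence "sin (Im q) = 0" by (simp add: Im_exp)
    moreover have "\<bar>Im q\<bar> < pi"
    proof -
      have "\<bar>Im q\<bar> \<le> norm q" by (rule abs_Im_le_cmod)
      also have "\<dots> < 2" using u q_def by (simp add: norm_mult)
      finally show ?thesis using pi_gt3 by simp
    qed
    ultimately have "Im q = 0" using sin_eq_0_pi[of "Im q"] by auto
    hence "Re (exp q) > 0" by (simp add: Re_exp)
    moreover have "Re (exp q) = 2/r - 1" using ex q_def by simp
    moreover have "2/r - 1 < 0" using rn by (simp add: divide_neg_pos)
    ultimately show False by simp
  qed
qed

lemma Re_BB_pos: fixes u :: complex assumes "norm u < 1" shows "Re (BB u) > 0"
proof -
  define v where "v = 1 + tanh u"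
  have nv: "v \<notin> \<real>\<^sub>\<le>\<^sub>0" using BB_not_nonpos[OF assms] v_def by simp
  have "cmod v + Re v > 0"
  proof (rule ccontr)
    assume "\<not> cmod v + Re v > 0"
    hence le: "cmod v \<le> - Re v" by simp
    have "Im v = 0"
    proof -
      have "(cmod v)^2 = (Re v)^2 + (Im v)^2" by (simp add: cmod_power2)
      moreover have "(cmod v)^2 \<le> (- Re v)^2" using le norm_ge_zero[of v] by (intro power_mono) auto
      ultimately show ?thesis by simp
    qed
    moreover have "Re v \<le> 0" using le norm_ge_zero[of v] by linarith
    ultimately have "v = of_real (Re v)" "Re v \<le> 0" by (auto simp: complex_eq_iff)
    hence "v \<in> \<real>\<^sub>\<le>\<^sub>0" unfolding nonpos_Reals_def by blast
    thus False using nv by simp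
  qed
  thus ?thesis unfolding BB_def v_def[symmetric] by simp
qed

lemma part2:
  assumes hf: "f2 holomorphic_on ball 0 1" and f0: "f2 0 = 0"
    and eq: "\<forall>z\<in>ball 0 1. deriv f2 z = BB (z ^ 2)"
  shows "class_BT f2 \<and> cmod (H21 f2) = 1/144"
proof -
  have inj: "inj_on f2 (ball 0 1)"
  proof (rule inj_re_pos[OF hf])
    fix z :: complex assume z: "z \<in> ball 0 1"
    have "norm (z^2) < 1" using z by (simp add: norm_power power_less_one_iff abs_square_less_1)
    thus "Re (deriv f2 z) > 0" using eq z Re_BB_pos by simp
  qed
  have d0: "deriv f2 0 = 1" using eq by (simp add: BB_def)
  have sub: "subordinate (deriv f2) BB"
    unfolding subordinate_def
  proof (intro exI[of _ "\<lambda>z. z^2"] conjI)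
    show "(\<lambda>z. z^2) holomorphic_on ball 0 1" by (intro holomorphic_intros)
    show "(\<lambda>z::complex. z^2) ` ball 0 1 \<subseteq> ball 0 1"
      by (auto simp: norm_power abs_square_less_1)
  qed (use eq in auto)
  have cls: "class_BT f2" using hf inj f0 d0 sub by (simp add: class_BT_def class_S_def)
  have l: "deriv f2 has_fps_expansion fps_deriv (PS f2)"
    by (intro has_fps_expansion_deriv hol_ball_fps[OF hf])
  have eW: "(\<lambda>z::complex. z^2) has_fps_expansion fps_X ^ 2" by (rule has_fps_expansion_fps_X_power)
  have W0: "(fps_X ^ 2 :: complex fps) $ 0 = 0" by simp
  have r: "(BB \<circ> (\<lambda>z. z^2)) has_fps_expansion (Bf oo fps_X ^ 2)"
    by (intro has_fps_expansion_compose BB_fps eW W0)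
  have D: "fps_deriv (PS f2) = Bf oo fps_X ^ 2"
    by (intro fps_exp_unique[OF l r] ev_ball_eq) (simp add: eq)
  define c1 c2 c3 where "c1 = (fps_X ^ 2 :: complex fps) $ 1" and "c2 = (fps_X ^ 2 :: complex fps) $ 2"
    and "c3 = (fps_X ^ 2 :: complex fps) $ 3"
  have cv: "c1 = 0" "c2 = 1" "c3 = 0" unfolding c1_def c2_def c3_def by (simp_all add: fps_X_power_iff)
  define a2 a3 a4 where "a2 = PS f2 $ 2" and "a3 = PS f2 $ 3" and "a4 = PS f2 $ 4"
  have k: "fps_deriv (PS f2) $ n = (Bf oo fps_X ^ 2) $ n" for n using D by simp
  have r1: "2 * a2 = c1/2" using k[of 1] compose_coeffs(1)[OF W0, of Bf] Bf_coeffs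
    unfolding a2_def c1_def by (simp add: eval_nat_numeral)
  have r2: "3 * a3 = c2/2 - c1^2/8" using k[of 2] compose_coeffs(2)[OF W0, of Bf] Bf_coeffs
    unfolding a3_def c1_def c2_def by (simp add: eval_nat_numeral)
  have r3: "4 * a4 = c3/2 - 1/4 * c1*c2 - 5/48 * c1^3" using k[of 3] compose_coeffs(3)[OF W0, of Bf] Bf_coeffs
    unfolding a4_def c1_def c2_def c3_def by (simp add: eval_nat_numeral)
  have H: "H21 f2 = (3/8 * c1*c3 - 1/48 * c1^2*c2 - 1/3 * c2^2 - 73/768 * c1^4) / 48"
    unfolding H21_def gamma1_def gamma2_def gamma3_def tcoeff_PS[OF hf] a2_def[symmetric] a3_def[symmetric] a4_def[symmetric]
    by (rule H21_formula[OF r1 r2 r3])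
  have "cmod (H21 f2) = 1/144" unfolding H cv by (simp add: norm_divide)
  with cls show ?thesis by simp
qed

theorem theorem2p1:
  shows "(\<forall>f. class_BT f \<longrightarrow> cmod (H21 f) \<le> 1 / 144) \<and>
         (\<forall>f2. f2 holomorphic_on ball 0 1 \<and> f2 0 = 0 \<and>
               (\<forall>z\<in>ball 0 1. deriv f2 z = BB (z ^ 2))
            \<longrightarrow> class_BT f2 \<and> cmod (H21 f2) = 1 / 144)"
  using part1 part2 by auto

end
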